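(* For every planar rooted forest $\tau$ (decorated or not) with vertex set $V=V(\tau)$ and all $h,k\ge0$, $$(h+k)^{|\tau|}=\sum_{\substack{V'\sqcup V''=V\\ V''\ \text{down-set for }\ll}}\frac{\tau!}{(V',\ll|_{V'})!\,(V'',\ll|_{V''})!}\,h^{|V'|}k^{|V''|},$$ where the sum runs over all partitions of $V$ into $V'$ and $V''$ such that $V''$ is downward closed for $\ll$ (if $v\in V''$ and $w\ll v$ then $w\in V''$).
   Context: Planar rooted forests: finite left-to-right ordered sequences of planar rooted trees (children of each vertex linearly ordered left to right). On the vertex set, $v<w$ iff $v\ne w$ and $v$ lies on the path from a root to $w$; $\ll$ is the transitive closure of the relation $R$: $vRw$ iff $v<w$, or $v,w$ are children of a common vertex with $v$ to the right of $w$, or $v,w$ are both roots with $v$ to the right of $w$. For a finite poset $(P,\le)$ and $s<t$, $\Omega^{st}_P=\{(t_v)_{v\in P}\in[s,t]^P:\ t_v\ge t_w\text{ whenever }v<w\}$ and the poset factorial $P!$ is defined by $\mathrm{Vol}(\Omega^{st}_P)=(t-s)^{|P|}/P!$ (empty poset: $1$). The planar factorial is $\tau!:=(V(\tau),\ll)!$; $(W,\ll|_W)!$ is the factorial of the subset $W$ with the restricted order. *)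

theory Defs
  imports "HOL-Analysis.Analysis"
begin

text \<open>Planar rooted trees, possibly decorated by labels of type 'a (use unit for
undecorated trees). Children are ordered left to right by list position.
A planar rooted forest is a list of planar rooted trees (roots ordered left to right).\<close>

datatype 'a ptree = Node 'a "'a ptree list"

text \<open>Vertices of a forest are addressed by nonempty index paths:
[i] is the i-th root, i # p is the vertex with address p inside the i-th tree's
child forest.\<close>

inductive vtx :: "'a ptree list \<Rightarrow> nat list \<Rightarrow> bool" where
  root: "i < length ts \<Longrightarrow> vtx ts [i]"
| sub: "i < length ts \<Longrightarrow> ts ! i = Node a cs \<Longrightarrow> vtx cs p \<Longrightarrow> vtx ts (i # p)"

definition verts :: "'a ptree list \<Rightarrow> nat list set" where
  "verts ts = {p. vtx ts p}"

text \<open>v < w: v is a proper ancestor of w (proper prefix of the address).\<close>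
definition anc :: "nat list \<Rightarrow> nat list \<Rightarrow> bool" where
  "anc v w \<longleftrightarrow> v \<noteq> w \<and> (\<exists>q. w = v @ q)"

text \<open>The relation R: v < w, or v, w are siblings (children of a common vertex,
or both roots) with v to the right of w.\<close>
definition relR :: "'a ptree list \<Rightarrow> nat list \<Rightarrow> nat list \<Rightarrow> bool" where
  "relR ts v w \<longleftrightarrow> v \<in> verts ts \<and> w \<in> verts ts \<and>
     (anc v w \<or> (\<exists>p i j. v = p @ [i] \<and> w = p @ [j] \<and> j < i))"

definition planar_lt :: "'a ptree list \<Rightarrow> nat list \<Rightarrow> nat list \<Rightarrow> bool" where
  "planar_lt ts = (relR ts)\<^sup>+\<^sup>+"

text \<open>Poset factorial: Vol(\<Omega>^{st}_P) = (t-s)^|P| / P!, with the volume taken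
for s = 0, t = 1 (the quantity is independent of s < t by scaling).\<close>
definition omega_poset :: "'b set \<Rightarrow> ('b \<Rightarrow> 'b \<Rightarrow> bool) \<Rightarrow> real \<Rightarrow> real \<Rightarrow> ('b \<Rightarrow> real) set" where
  "omega_poset P lt s t =
     {f \<in> P \<rightarrow>\<^sub>E {s..t}. \<forall>v\<in>P. \<forall>w\<in>P. lt v w \<longrightarrow> f w \<le> f v}"

definition poset_fact :: "'b set \<Rightarrow> ('b \<Rightarrow> 'b \<Rightarrow> bool) \<Rightarrow> real" where
  "poset_fact P lt = 1 / measure (PiM P (\<lambda>_. lborel)) (omega_poset P lt 0 1)"

definition downset :: "('b \<Rightarrow> 'b \<Rightarrow> bool) \<Rightarrow> 'b set \<Rightarrow> bool" where
  "downset lt D \<longleftrightarrow> (\<forall>v\<in>D. \<forall>w. lt w v \<longrightarrow> w \<in> D)"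

end

theory Submission
  imports Defs
begin


abbreviation LB :: "'b set \<Rightarrow> ('b \<Rightarrow> real) measure" where
  "LB P \<equiv> PiM P (\<lambda>_. lborel)"

definition OmS :: "'b set \<Rightarrow> ('b \<Rightarrow> 'b \<Rightarrow> bool) \<Rightarrow> real set \<Rightarrow> ('b \<Rightarrow> real) set" where
  "OmS P lt S = {f \<in> P \<rightarrow>\<^sub>E S. \<forall>v\<in>P. \<forall>w\<in>P. lt v w \<longrightarrow> f w \<le> f v}"

lemma omega_OmS: "omega_poset P lt s t = OmS P lt {s..t}"
  by (simp add: omega_poset_def OmS_def)

lemma OmS_sets[measurable]:
  assumes "finite P" "S \<in> sets borel"
  shows "OmS P lt S \<in> sets (LB P)"
proof -
  have "OmS P lt S = (P \<rightarrow>\<^sub>E S) \<inter> {f \<in> space (LB P). \<forall>v\<in>P. \<forall>w\<in>P. lt v w \<longrightarrow> f w \<le> f v}"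
    by (auto simp: OmS_def space_PiM)
  also have "\<dots> \<in> sets (LB P)"
  proof (rule sets.Int)
    show "P \<rightarrow>\<^sub>E S \<in> sets (LB P)"
      using assms by (intro sets_PiM_I_finite) auto
    have "Measurable.pred (LB P) (\<lambda>f. \<forall>v\<in>P. \<forall>w\<in>P. lt v w \<longrightarrow> f w \<le> f v)"
    proof -
      have [measurable]: "Measurable.pred (LB P) (\<lambda>f. f w \<le> f v)" if "v\<in>P" "w\<in>P" for v w
      proof -
        have a: "(\<lambda>f. f w) \<in> borel_measurable (LB P)" and b: "(\<lambda>f. f v) \<in> borel_measurable (LB P)"
          using measurable_component_singleton[of w P "\<lambda>_. lborel::real measure"]
            measurable_component_singleton[of v P "\<lambda>_. lborel::real measure"] that by auto
        show ?thesis unfolding pred_def using borel_measurable_le[OF a b] .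
      qed
      show ?thesis using assms by (intro pred_intros_finite pred_intros_logic) auto
    qed
    then show "{f \<in> space (LB P). \<forall>v\<in>P. \<forall>w\<in>P. lt v w \<longrightarrow> f w \<le> f v} \<in> sets (LB P)"
      by (simp add: pred_def)
  qed
  finally show ?thesis .
qed

lemma lborel_affine_emeasure:
  fixes c :: real
  assumes "c > 0" "A \<in> sets borel"
  shows "emeasure lborel A = ennreal c * emeasure lborel ((\<lambda>x. a + c * x) -` A)"
proof -
  have [measurable]: "(\<lambda>x. a + c * x) -` A \<in> sets borel"
    using measurable_sets[of "\<lambda>x. a + c * x" borel borel A] assms by simp
  have "emeasure lborel A = (\<integral>\<^sup>+x. indicator A x \<partial>lborel)"
    using assms by simp
  also have "\<dots> = ennreal \<bar>c\<bar> * (\<integral>\<^sup>+x. indicator A (a + c * x) \<partial>lborel)"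
    using assms by (intro nn_integral_real_affine) auto
  also have "(\<lambda>x. indicator A (a + c * x) :: ennreal) = indicator ((\<lambda>x. a + c * x) -` A)"
    by (auto simp: indicator_def)
  also have "(\<integral>\<^sup>+x. indicator ((\<lambda>x. a + c * x) -` A) x \<partial>lborel) = emeasure lborel ((\<lambda>x. a + c * x) -` A)"
    using assms by (intro nn_integral_indicator) measurable
  finally show ?thesis using assms by simp
qed

lemma OmS_scale:
  fixes c :: real and P :: "'b set"
  assumes fin: "finite P" and c: "c > 0" and S: "S \<in> sets borel"
  shows "emeasure (LB P) (OmS P lt S) = ennreal c ^ card P * emeasure (LB P) (OmS P lt ((\<lambda>x. a + c * x) -` S))"
proof -
  interpret product_sigma_finite "\<lambda>_. lborel::real measure" by standard
  define T :: "('b \<Rightarrow> real) \<Rightarrow> ('b \<Rightarrow> real)" where "T = (\<lambda>f. \<lambda>v\<in>P. a + c * f v)"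
  have Tm: "T \<in> measurable (LB P) (LB P)" unfolding T_def by measurable
  have pre: "(\<lambda>x. a + c * x) -` B \<in> sets borel" if "B \<in> sets borel" for B
    using measurable_sets[of "\<lambda>x. a + c * x" borel borel B] that by simp
  have eq: "scale_measure (ennreal c ^ card P) (distr (LB P) (LB P) T) = LB P"
  proof (rule PiM_eqI[OF fin])
    show "sets (scale_measure (ennreal c ^ card P) (distr (LB P) (LB P) T)) = sets (LB P)" by simp
  next
    fix A :: "'b \<Rightarrow> real set" assume A: "\<And>i. i \<in> P \<Longrightarrow> A i \<in> sets lborel"
    have PA: "Pi\<^sub>E P A \<in> sets (LB P)" using A fin by (intro sets_PiM_I_finite) auto
    have "T -` Pi\<^sub>E P A \<inter> space (LB P) = Pi\<^sub>E P (\<lambda>v. (\<lambda>x. a + c * x) -` A v)"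
      by (auto simp: T_def space_PiM PiE_def Pi_def extensional_def)
    then have "emeasure (scale_measure (ennreal c ^ card P) (distr (LB P) (LB P) T)) (Pi\<^sub>E P A)
       = ennreal c ^ card P * (\<Prod>v\<in>P. emeasure lborel ((\<lambda>x. a + c * x) -` A v))"
      using PA Tm A fin pre by (simp add: emeasure_distr emeasure_PiM)
    also have "\<dots> = (\<Prod>v\<in>P. ennreal c * emeasure lborel ((\<lambda>x. a + c * x) -` A v))"
      by (simp add: prod.distrib)
    also have "\<dots> = (\<Prod>v\<in>P. emeasure lborel (A v))"
      using A c by (intro prod.cong refl lborel_affine_emeasure[symmetric]) auto
    finally show "emeasure (scale_measure (ennreal c ^ card P) (distr (LB P) (LB P) T)) (Pi\<^sub>E P A) = (\<Prod>v\<in>P. emeasure lborel (A v))" .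
  qed
  have pre2: "T -` OmS P lt S \<inter> space (LB P) = OmS P lt ((\<lambda>x. a + c * x) -` S)"
    using c by (auto simp: T_def OmS_def space_PiM PiE_def Pi_def extensional_def)
  have "emeasure (LB P) (OmS P lt S) = emeasure (scale_measure (ennreal c ^ card P) (distr (LB P) (LB P) T)) (OmS P lt S)"
    by (simp only: eq)
  also have "\<dots> = ennreal c ^ card P * emeasure (LB P) (T -` OmS P lt S \<inter> space (LB P))"
    using Tm fin S by (simp add: emeasure_distr)
  finally show ?thesis by (simp only: pre2)
qed

lemma OmS_null:
  fixes P :: "'b set"
  assumes fin: "finite P"
  shows "emeasure (LB P) (OmS P lt {0..1}) = emeasure (LB P) (OmS P lt {0<..1})"
proof -
  interpret product_sigma_finite "\<lambda>_. lborel::real measure" by standard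
  define N where "N = (\<Union>v\<in>P. Pi\<^sub>E P (\<lambda>w. if w = v then {0::real} else UNIV))"
  have N: "N \<in> null_sets (LB P)"
    unfolding N_def
  proof (rule null_sets.finite_UN[OF fin])
    fix v assume v: "v \<in> P"
    have "Pi\<^sub>E P (\<lambda>w. if w = v then {0::real} else UNIV) \<in> sets (LB P)"
      using fin by (intro sets_PiM_I_finite) auto
    moreover have "emeasure (LB P) (Pi\<^sub>E P (\<lambda>w. if w = v then {0::real} else UNIV)) = 0"
      using fin v by (subst emeasure_PiM) (auto intro!: prod_zero bexI[OF _ v])
    ultimately show "Pi\<^sub>E P (\<lambda>w. if w = v then {0::real} else UNIV) \<in> null_sets (LB P)"
      by auto
  qed
  have sub: "OmS P lt {0..1} - OmS P lt {0<..1} \<in> null_sets (LB P)"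
  proof (rule null_sets_subset[OF N])
    show "OmS P lt {0..1} - OmS P lt {0<..1} \<in> sets (LB P)" using fin by auto
    show "OmS P lt {0..1} - OmS P lt {0<..1} \<subseteq> N"
    proof
      fix f assume f: "f \<in> OmS P lt {0..1} - OmS P lt {0<..1}"
      then obtain v where v: "v \<in> P" "f v = 0"
        by (force simp: OmS_def PiE_def Pi_def)
      then show "f \<in> N" using f by (auto simp: N_def OmS_def PiE_def Pi_def intro!: bexI[OF _ v(1)])
    qed
  qed
  have "OmS P lt {0..1} = OmS P lt {0<..1} \<union> (OmS P lt {0..1} - OmS P lt {0<..1})"
    by (auto simp: OmS_def PiE_def Pi_def)
  then show ?thesis using emeasure_Un_null_set[OF _ sub, of "OmS P lt {0<..1}"] fin by auto
qed

lemma OmS_product: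
  fixes I J :: "'b set"
  assumes IJ: "I \<inter> J = {}" "finite I" "finite J"
    and S1: "S1 \<in> sets borel" and S2: "S2 \<in> sets borel"
  shows "emeasure (LB (I \<union> J)) {f \<in> space (LB (I \<union> J)). restrict f I \<in> OmS I lt S1 \<and> restrict f J \<in> OmS J lt S2}
     = emeasure (LB I) (OmS I lt S1) * emeasure (LB J) (OmS J lt S2)"
proof -
  interpret product_sigma_finite "\<lambda>_. lborel::real measure" by standard
  let ?A = "{f \<in> space (LB (I \<union> J)). restrict f I \<in> OmS I lt S1 \<and> restrict f J \<in> OmS J lt S2}"
  have r1: "(\<lambda>f. restrict f I) \<in> measurable (LB (I \<union> J)) (LB I)"
    by (rule measurable_restrict_subset) auto
  have r2: "(\<lambda>f. restrict f J) \<in> measurable (LB (I \<union> J)) (LB J)"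
    by (rule measurable_restrict_subset) auto
  have Am: "?A \<in> sets (LB (I \<union> J))"
  proof -
    have "?A = ((\<lambda>f. restrict f I) -` OmS I lt S1 \<inter> space (LB (I \<union> J))) \<inter>
               ((\<lambda>f. restrict f J) -` OmS J lt S2 \<inter> space (LB (I \<union> J)))" by auto
    also have "\<dots> \<in> sets (LB (I \<union> J))"
      using r1 r2 IJ S1 S2 by (intro sets.Int measurable_sets[OF r1] measurable_sets[OF r2] OmS_sets) auto
    finally show ?thesis .
  qed
  have slice: "(\<lambda>y. merge I J (x, y)) -` ?A \<inter> space (LB J) = (if x \<in> OmS I lt S1 then OmS J lt S2 else {})"
    if x: "x \<in> space (LB I)" for x
  proof -
    have xr: "restrict x I = x" using x by (auto simp: space_PiM PiE_def extensional_restrict)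
    have "restrict (merge I J (x, y)) J = restrict y J" for y
      using IJ by (auto simp: merge_def restrict_def fun_eq_iff)
    moreover have "restrict (merge I J (x, y)) I = restrict x I" for y
      using IJ by (auto simp: merge_def restrict_def fun_eq_iff)
    moreover have "restrict y J = y" if "y \<in> space (LB J)" for y
      using that by (auto simp: space_PiM PiE_def extensional_restrict)
    moreover have "merge I J (x, y) \<in> space (LB (I \<union> J))" if "y \<in> space (LB J)" for y
      using x that by (auto simp: space_PiM)
    moreover have "OmS J lt S2 \<subseteq> space (LB J)" by (auto simp: OmS_def space_PiM)
    ultimately show ?thesis using xr by (auto simp: restrict_merge)
  qed
  have "emeasure (LB (I \<union> J)) ?A = (\<integral>\<^sup>+x. emeasure (LB J) ((\<lambda>y. merge I J (x, y)) -` ?A \<inter> space (LB J)) \<partial>LB I)"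
    using IJ Am by (rule emeasure_fold_integral)
  also have "\<dots> = (\<integral>\<^sup>+x. emeasure (LB J) (OmS J lt S2) * indicator (OmS I lt S1) x \<partial>LB I)"
    apply (rule nn_integral_cong)
    apply (subst slice, assumption)
    apply (auto simp: indicator_def)
    done
  also have "\<dots> = emeasure (LB J) (OmS J lt S2) * emeasure (LB I) (OmS I lt S1)"
    using IJ S1 by (intro nn_integral_cmult_indicator OmS_sets)
  finally show ?thesis by (simp add: mult.commute)
qed

lemma OmS_split:
  fixes V :: "'b set" and h k :: real
  assumes fin: "finite V" and h: "h \<ge> 0" and k: "k \<ge> 0"
    and cl: "\<And>v w. lt w v \<Longrightarrow> v \<in> V \<Longrightarrow> w \<in> V"
  shows "emeasure (LB V) (OmS V lt {0..h+k}) =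
    (\<Sum>D\<in>{D. D \<subseteq> V \<and> downset lt D}. emeasure (LB (V-D)) (OmS (V-D) lt {0..h}) * emeasure (LB D) (OmS D lt {h<..h+k}))"
proof -
  define Ds where "Ds = {D. D \<subseteq> V \<and> downset lt D}"
  have finDs: "finite Ds" unfolding Ds_def
    by (rule finite_subset[of _ "Pow V"]) (use fin in auto)
  define A where "A D = {f \<in> space (LB V). restrict f (V-D) \<in> OmS (V-D) lt {0..h} \<and> restrict f D \<in> OmS D lt {h<..h+k}}" for D
  have Ameas: "emeasure (LB V) (A D) = emeasure (LB (V-D)) (OmS (V-D) lt {0..h}) * emeasure (LB D) (OmS D lt {h<..h+k})"
    and Asets: "A D \<in> sets (LB V)" if "D \<in> Ds" for D
  proof -
    have DV: "(V - D) \<union> D = V" using that by (auto simp: Ds_def)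
    have fD: "finite D" using that fin by (auto simp: Ds_def intro: finite_subset)
    show "emeasure (LB V) (A D) = emeasure (LB (V-D)) (OmS (V-D) lt {0..h}) * emeasure (LB D) (OmS D lt {h<..h+k})"
      using OmS_product[of "V-D" D "{0..h}" "{h<..h+k}" lt] fin fD unfolding DV A_def by auto
    have r1: "(\<lambda>f. restrict f (V-D)) \<in> measurable (LB V) (LB (V-D))"
      by (rule measurable_restrict_subset) auto
    have r2: "(\<lambda>f. restrict f D) \<in> measurable (LB V) (LB D)"
      using that by (intro measurable_restrict_subset) (auto simp: Ds_def)
    have "A D = ((\<lambda>f. restrict f (V-D)) -` OmS (V-D) lt {0..h} \<inter> space (LB V)) \<inter>
               ((\<lambda>f. restrict f D) -` OmS D lt {h<..h+k} \<inter> space (LB V))" by (auto simp: A_def)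
    also have "\<dots> \<in> sets (LB V)"
      using fin fD by (intro sets.Int measurable_sets[OF r1] measurable_sets[OF r2] OmS_sets) auto
    finally show "A D \<in> sets (LB V)" .
  qed
  have Aeq: "D = {v \<in> V. f v > h}" if "D \<in> Ds" "f \<in> A D" for D f
  proof -
    have "D \<subseteq> V" using that by (auto simp: Ds_def)
    moreover have "f v > h" if "v \<in> D" for v
      using \<open>f \<in> A D\<close> that by (auto simp: A_def OmS_def PiE_def Pi_def)
    moreover have "\<not> f v > h" if "v \<in> V" "v \<notin> D" for v
      using \<open>f \<in> A D\<close> that by (auto simp: A_def OmS_def PiE_def Pi_def)
    ultimately show ?thesis by auto
  qed
  have disj: "disjoint_family_on A Ds"
    unfolding disjoint_family_on_def
  proof (intro ballI impI)
    fix D1 D2 assume "D1 \<in> Ds" "D2 \<in> Ds" "D1 \<noteq> D2"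
    then show "A D1 \<inter> A D2 = {}" using Aeq by blast
  qed
  have U: "OmS V lt {0..h+k} = (\<Union>D\<in>Ds. A D)"
  proof
    show "OmS V lt {0..h+k} \<subseteq> (\<Union>D\<in>Ds. A D)"
    proof
      fix f assume f: "f \<in> OmS V lt {0..h+k}"
      then have fP: "f \<in> V \<rightarrow>\<^sub>E {0..h+k}" and fc: "\<And>v w. v \<in> V \<Longrightarrow> w \<in> V \<Longrightarrow> lt v w \<Longrightarrow> f w \<le> f v"
        by (auto simp: OmS_def)
      define D where "D = {v \<in> V. f v > h}"
      have "D \<in> Ds" unfolding Ds_def downset_def
      proof (intro CollectI conjI ballI allI impI)
        show "D \<subseteq> V" by (auto simp: D_def)
        fix v w assume "v \<in> D" "lt w v"
        then have "w \<in> V" "v \<in> V" "f v > h" using cl by (auto simp: D_def)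
        with fc[OF \<open>w \<in> V\<close> \<open>v \<in> V\<close> \<open>lt w v\<close>] show "w \<in> D" by (auto simp: D_def)
      qed
      moreover have "f \<in> A D"
        unfolding A_def using fP fc by (auto simp: space_PiM OmS_def D_def PiE_def Pi_def)
      ultimately show "f \<in> (\<Union>D\<in>Ds. A D)" by blast
    qed
    show "(\<Union>D\<in>Ds. A D) \<subseteq> OmS V lt {0..h+k}"
    proof
      fix f assume "f \<in> (\<Union>D\<in>Ds. A D)"
      then obtain D where D: "D \<in> Ds" "f \<in> A D" by blast
      have DV: "D \<subseteq> V" and dn: "\<And>v w. v \<in> D \<Longrightarrow> lt w v \<Longrightarrow> w \<in> D" using D(1) by (auto simp: Ds_def downset_def)
      have sp: "f \<in> V \<rightarrow>\<^sub>E UNIV" using D(2) by (auto simp: A_def space_PiM)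
      have lo: "f v \<in> {0..h}" "\<And>w. w \<in> V - D \<Longrightarrow> lt v w \<Longrightarrow> f w \<le> f v" if "v \<in> V - D" for v
        using D(2) that by (auto simp: A_def OmS_def PiE_def Pi_def)
      have hi: "f v \<in> {h<..h+k}" "\<And>w. w \<in> D \<Longrightarrow> lt v w \<Longrightarrow> f w \<le> f v" if "v \<in> D" for v
        using D(2) that by (auto simp: A_def OmS_def PiE_def Pi_def)
      show "f \<in> OmS V lt {0..h+k}"
        unfolding OmS_def
      proof (intro CollectI conjI ballI impI)
        show "f \<in> V \<rightarrow>\<^sub>E {0..h+k}"
        proof (rule PiE_I)
          fix v assume "v \<in> V"
          then show "f v \<in> {0..h+k}" using lo(1)[of v] hi(1)[of v] k h by (cases "v \<in> D") auto
        next
          fix v assume "v \<notin> V" then show "f v = undefined" using sp by auto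
        qed
        fix v w assume vw: "v \<in> V" "w \<in> V" "lt v w"
        show "f w \<le> f v"
        proof (cases "v \<in> D")
          case True
          then show ?thesis using hi[OF True] lo[of w] vw by (cases "w \<in> D") auto
        next
          case False
          then have "w \<notin> D" using dn vw by blast
          then show ?thesis using lo[of v] vw False by auto
        qed
      qed
    qed
  qed
  have "emeasure (LB V) (OmS V lt {0..h+k}) = (\<Sum>D\<in>Ds. emeasure (LB V) (A D))"
    unfolding U using Asets disj finDs by (intro sum_emeasure[symmetric]) auto
  also have "\<dots> = (\<Sum>D\<in>Ds. emeasure (LB (V-D)) (OmS (V-D) lt {0..h}) * emeasure (LB D) (OmS D lt {h<..h+k}))"
    using Ameas by (intro sum.cong) auto
  finally show ?thesis unfolding Ds_def .
qed

lemma OmS_unit_finite: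
  fixes P :: "'b set"
  assumes fin: "finite P"
  shows "emeasure (LB P) (OmS P lt {0..1}) = ennreal (measure (LB P) (OmS P lt {0..1}))"
proof -
  interpret product_sigma_finite "\<lambda>_. lborel::real measure" by standard
  have "emeasure (LB P) (OmS P lt {0..1}) \<le> emeasure (LB P) (P \<rightarrow>\<^sub>E {0..1::real})"
    using fin by (intro emeasure_mono) (auto simp: OmS_def intro!: sets_PiM_I_finite)
  also have "\<dots> = 1" using fin by (simp add: emeasure_PiM)
  finally have "emeasure (LB P) (OmS P lt {0..1}) \<noteq> top"
    using ennreal_one_less_top by (metis linorder_not_le)
  then show ?thesis by (rule emeasure_eq_ennreal_measure)
qed

lemma pre1: "(c::real) > 0 \<Longrightarrow> (\<lambda>x. 0 + c * x) -` {0..c} = {0..1}"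
  by (auto simp: zero_le_mult_iff mult_le_cancel_left1)

lemma pre2: "(c::real) > 0 \<Longrightarrow> (\<lambda>x. h + c * x) -` {h<..h+c} = {0<..1}"
  by (auto simp: zero_less_mult_iff mult_le_cancel_left1)

lemma general_identity:
  fixes V :: "'b set" and h k :: real
  assumes fin: "finite V" and h: "h > 0" and k: "k > 0"
    and cl: "\<And>v w. lt w v \<Longrightarrow> v \<in> V \<Longrightarrow> w \<in> V"
  shows "(h+k) ^ card V * measure (LB V) (OmS V lt {0..1}) =
    (\<Sum>D\<in>{D. D \<subseteq> V \<and> downset lt D}. (h ^ card (V-D) * measure (LB (V-D)) (OmS (V-D) lt {0..1})) *
        (k ^ card D * measure (LB D) (OmS D lt {0..1})))"
proof -
  define cc :: "'b set \<Rightarrow> real" where "cc P = measure (LB P) (OmS P lt {0..1})" for P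
  have cc0: "cc P \<ge> 0" for P unfolding cc_def by simp
  have e: "emeasure (LB P) (OmS P lt {0..1}) = ennreal (cc P)" if "finite P" for P
    unfolding cc_def using that by (rule OmS_unit_finite)
  have sc1: "emeasure (LB P) (OmS P lt {0..c}) = ennreal (c ^ card P * cc P)" if "finite P" "c > 0" for P and c :: real
  proof -
    have "emeasure (LB P) (OmS P lt {0..c}) = ennreal c ^ card P * emeasure (LB P) (OmS P lt ((\<lambda>x. 0 + c * x) -` {0..c}))"
      using that by (intro OmS_scale) auto
    also have "\<dots> = ennreal c ^ card P * ennreal (cc P)" unfolding pre1[OF that(2)] e[OF that(1)] ..
    finally show ?thesis using that cc0 by (simp add: ennreal_mult ennreal_power)
  qed
  have sc2: "emeasure (LB P) (OmS P lt {h<..h+c}) = ennreal (c ^ card P * cc P)" if "finite P" "c > 0" for P and c :: real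
  proof -
    have "emeasure (LB P) (OmS P lt {h<..h+c}) = ennreal c ^ card P * emeasure (LB P) (OmS P lt ((\<lambda>x. h + c * x) -` {h<..h+c}))"
      using that by (intro OmS_scale) auto
    also have "\<dots> = ennreal c ^ card P * ennreal (cc P)" unfolding pre2[OF that(2)] OmS_null[OF that(1), symmetric] e[OF that(1)] ..
    finally show ?thesis using that cc0 by (simp add: ennreal_mult ennreal_power)
  qed
  define Ds where "Ds = {D. D \<subseteq> V \<and> downset lt D}"
  have "ennreal ((h+k) ^ card V * cc V) = emeasure (LB V) (OmS V lt {0..h+k})"
    using fin h k by (simp add: sc1)
  also have "\<dots> = (\<Sum>D\<in>Ds. emeasure (LB (V-D)) (OmS (V-D) lt {0..h}) * emeasure (LB D) (OmS D lt {h<..h+k}))"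
    unfolding Ds_def using fin h k cl by (intro OmS_split) auto
  also have "\<dots> = (\<Sum>D\<in>Ds. ennreal ((h ^ card (V-D) * cc (V-D)) * (k ^ card D * cc D)))"
  proof (intro sum.cong refl)
    fix D assume "D \<in> Ds"
    then have "finite D" using fin by (auto simp: Ds_def intro: finite_subset)
    then show "emeasure (LB (V-D)) (OmS (V-D) lt {0..h}) * emeasure (LB D) (OmS D lt {h<..h+k}) =
        ennreal ((h ^ card (V-D) * cc (V-D)) * (k ^ card D * cc D))"
      using fin h k cc0 by (simp add: sc1 sc2 ennreal_mult)
  qed
  also have "\<dots> = ennreal (\<Sum>D\<in>Ds. (h ^ card (V-D) * cc (V-D)) * (k ^ card D * cc D))"
    using h k cc0 by (intro sum_ennreal) auto
  finally have "ennreal ((h+k) ^ card V * cc V) = ennreal (\<Sum>D\<in>Ds. (h ^ card (V-D) * cc (V-D)) * (k ^ card D * cc D))" .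
  then have "(h+k) ^ card V * cc V = (\<Sum>D\<in>Ds. (h ^ card (V-D) * cc (V-D)) * (k ^ card D * cc D))"
    using h k cc0 by (subst (asm) ennreal_inj) (auto intro!: sum_nonneg)
  then show ?thesis unfolding cc_def Ds_def .
qed



lemma len_le_size_list: "length xs \<le> size_list f xs"
  by (induction xs) auto

lemma vtx_bound: "vtx ts p \<Longrightarrow> set p \<subseteq> {..<size_list size ts} \<and> length p \<le> size_list size ts"
proof (induction rule: vtx.induct)
  case (root i ts)
  have "length ts \<le> size_list size ts" by (rule len_le_size_list)
  with root show ?case by auto
next
  case (sub i ts a cs p)
  have "ts ! i \<in> set ts" using sub(1) by (rule nth_mem)
  then have "size (ts ! i) \<le> size_list size ts" by (rule size_list_estimation') simp
  moreover have "size (ts ! i) = size_list size cs + 1" using sub by simp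
  moreover have "length ts \<le> size_list size ts" by (rule len_le_size_list)
  ultimately show ?case using sub by auto
qed

lemma finite_verts: "finite (verts ts)"
proof -
  have "verts ts \<subseteq> {p. set p \<subseteq> {..<size_list size ts} \<and> length p \<le> size_list size ts}"
    using vtx_bound by (auto simp: verts_def)
  moreover have "finite {p. set p \<subseteq> {..<size_list size ts} \<and> length p \<le> size_list size ts}"
    by (rule finite_lists_length_le) auto
  ultimately show ?thesis by (rule finite_subset)
qed

lemma vtx_nonempty: "vtx ts p \<Longrightarrow> p \<noteq> []"
  by (cases rule: vtx.cases) auto

lemma planar_lt_verts: "planar_lt ts v w \<Longrightarrow> v \<in> verts ts \<and> w \<in> verts ts"
  unfolding planar_lt_def
  by (induction rule: tranclp.induct) (auto simp: relR_def)

definition gkey :: "nat \<Rightarrow> nat list \<Rightarrow> int" where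
  "gkey N v = int (last v) - int N * int (length v)"

lemma relR_gkey:
  assumes "relR ts v w" and N: "\<And>u. u \<in> verts ts \<Longrightarrow> last u < N"
  shows "gkey N w < gkey N v"
proof -
  have vv: "v \<in> verts ts" "w \<in> verts ts" using assms by (auto simp: relR_def)
  then have ne: "v \<noteq> []" "w \<noteq> []" by (auto simp: verts_def vtx_nonempty)
  from assms(1) consider (a) "anc v w" | (s) p i j where "v = p @ [i]" "w = p @ [j]" "j < i"
    by (auto simp: relR_def)
  then show ?thesis
  proof cases
    case a
    then obtain q where q: "w = v @ q" "q \<noteq> []" by (auto simp: anc_def)
    then have "length w \<ge> length v + 1" by (cases q) auto
    then have "int N * int (length w) \<ge> int N * int (length v) + int N"
      by (metis distrib_left mult.right_neutral mult_left_mono of_nat_0_le_iff of_nat_add of_nat_le_iff of_nat_1)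
    moreover have "last w < N" using N vv by auto
    ultimately show ?thesis unfolding gkey_def by linarith
  next
    case s
    then show ?thesis by (simp add: gkey_def)
  qed
qed

lemma planar_lt_gkey:
  assumes "planar_lt ts v w" and N: "\<And>u. u \<in> verts ts \<Longrightarrow> last u < N"
  shows "gkey N w < gkey N v"
  using assms(1) unfolding planar_lt_def
proof (induction rule: tranclp.induct)
  case (r_into_trancl a b) then show ?case using relR_gkey N by blast
next
  case (trancl_into_trancl a b c)
  then show ?case using relR_gkey[OF trancl_into_trancl(2) N] by linarith
qed

lemma OmS_empty_measure: "measure (LB ({}::'b set)) (OmS {} lt {0..1}) = 1"
proof -
  have "OmS ({}::'b set) lt {0..1} = {\<lambda>_. undefined}" by (auto simp: OmS_def)
  then show ?thesis by (simp add: PiM_empty)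
qed

lemma OmS_pos:
  fixes V :: "'b set" and g :: "'b \<Rightarrow> int"
  assumes fin: "finite V" and mono: "\<And>v w. lt v w \<Longrightarrow> v \<in> V \<Longrightarrow> w \<in> V \<Longrightarrow> g w < g v"
  shows "measure (LB V) (OmS V lt {0..1}) > 0"
proof (cases "V = {}")
  case True then show ?thesis using OmS_empty_measure[of lt] by (metis zero_less_one)
next
  case False
  interpret product_sigma_finite "\<lambda>_. lborel::real measure" by standard
  define m where "m = Min (g ` V)"
  define M where "M = Max (g ` V)"
  have mg: "m \<le> g v" "g v \<le> M" if "v \<in> V" for v
    using that fin by (auto simp: m_def M_def)
  define L :: real where "L = of_int (M - m + 2)"
  have L2: "L \<ge> 2" using mg False unfolding L_def by fastforce
  define p where "p v = (of_int (g v - m + 1)) / L" for v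
  define \<delta> where "\<delta> = 1 / (2 * L)"
  have dpos: "\<delta> > 0" using L2 by (simp add: \<delta>_def)
  define B where "B = Pi\<^sub>E V (\<lambda>v. {p v - \<delta> <..< p v + \<delta>})"
  have BO: "B \<subseteq> OmS V lt {0..1}"
  proof
    fix f assume f: "f \<in> B"
    have fr: "p v - \<delta> < f v" "f v < p v + \<delta>" if "v \<in> V" for v using f that by (auto simp: B_def)
    have lo: "p v - \<delta> \<ge> 0" if "v \<in> V" for v
    proof -
      have "of_int (g v - m + 1) \<ge> (1::real)" using mg[OF that] by simp
      then have "p v \<ge> 1 / L" unfolding p_def using L2 by (simp add: divide_right_mono)
      moreover have "\<delta> \<le> 1 / L" unfolding \<delta>_def using L2 by (simp add: field_simps)
      ultimately show ?thesis by linarith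
    qed
    have hi: "p v + \<delta> \<le> 1" if "v \<in> V" for v
    proof -
      have "of_int (g v - m + 1) \<le> L - 1" using mg[OF that] unfolding L_def by simp
      then have "p v \<le> (L - 1) / L" unfolding p_def using L2 by (simp add: divide_right_mono)
      then show ?thesis unfolding \<delta>_def using L2 by (simp add: field_simps)
    qed
    have gap: "p w + \<delta> \<le> p v - \<delta>" if "lt v w" "v \<in> V" "w \<in> V" for v w
    proof -
      have "g w + 1 \<le> g v" using mono[OF that] by simp
      then have "of_int (g w - m + 1) + 1 \<le> (of_int (g v - m + 1) :: real)" by linarith
      then have "(of_int (g w - m + 1) + 1) / L \<le> (of_int (g v - m + 1) :: real) / L"
        using L2 by (simp add: divide_right_mono)
      then have "p w + 1 / L \<le> p v" unfolding p_def using L2 by (simp add: add_divide_distrib)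
      moreover have "2 * \<delta> = 1 / L" unfolding \<delta>_def using L2 by simp
      ultimately show ?thesis by linarith
    qed
    show "f \<in> OmS V lt {0..1}"
      unfolding OmS_def
    proof (intro CollectI conjI ballI impI)
      show "f \<in> V \<rightarrow>\<^sub>E {0..1}"
      proof (rule PiE_I)
        fix v assume v: "v \<in> V"
        show "f v \<in> {0..1}" using fr[OF v] lo[OF v] hi[OF v] by auto
      next
        fix v assume "v \<notin> V" then show "f v = undefined" using f by (auto simp: B_def)
      qed
    next
      fix v w assume "v \<in> V" "w \<in> V" "lt v w"
      then show "f w \<le> f v" using fr[of v] fr[of w] gap[of v w] by linarith
    qed
  qed
  have Bs: "B \<in> sets (LB V)" unfolding B_def using fin by (intro sets_PiM_I_finite) auto
  have "emeasure (LB V) B = (\<Prod>v\<in>V. emeasure lborel {p v - \<delta> <..< p v + \<delta>})"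
    unfolding B_def using fin by (subst emeasure_PiM) auto
  also have "\<dots> = (\<Prod>v\<in>V. ennreal (2 * \<delta>))"
    using dpos by (intro prod.cong refl) simp
  finally have "emeasure (LB V) B > 0" using dpos by (simp add: ennreal_power)
  also have "emeasure (LB V) B \<le> emeasure (LB V) (OmS V lt {0..1})"
    using BO fin by (intro emeasure_mono) auto
  also have "\<dots> = ennreal (measure (LB V) (OmS V lt {0..1}))"
    using fin by (rule OmS_unit_finite)
  finally show ?thesis by simp
qed



lemma poset_fact_eq: "poset_fact P lt = 1 / measure (LB P) (OmS P lt {0..1})"
  by (simp add: poset_fact_def omega_OmS)

lemma frac_alg: "(1 / (a::real)) / ((1 / b) * (1 / c)) = b * c / a"
  by (simp add: divide_inverse inverse_mult_distrib mult.commute)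

theorem mainTheorem8:
  fixes \<tau> :: "'a ptree list" and h k :: real
  assumes "h \<ge> 0" and "k \<ge> 0"
  shows "(h + k) ^ card (verts \<tau>) =
    (\<Sum>D\<in>{D. D \<subseteq> verts \<tau> \<and> downset (planar_lt \<tau>) D}.
       poset_fact (verts \<tau>) (planar_lt \<tau>) /
         (poset_fact (verts \<tau> - D) (planar_lt \<tau>) * poset_fact D (planar_lt \<tau>))
       * h ^ card (verts \<tau> - D) * k ^ card D)"
proof -
  define V where "V = verts \<tau>"
  define lt where "lt = planar_lt \<tau>"
  define cc where "cc P = measure (LB P) (OmS P lt {0..1})" for P
  define Ds where "Ds = {D. D \<subseteq> V \<and> downset lt D}"
  have fin: "finite V" unfolding V_def by (rule finite_verts)
  have cl: "\<And>v w. lt w v \<Longrightarrow> v \<in> V \<Longrightarrow> w \<in> V" unfolding lt_def V_def using planar_lt_verts by blast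
  have finDs: "finite Ds" unfolding Ds_def by (rule finite_subset[of _ "Pow V"]) (use fin in auto)
  define N where "N = Suc (Max (last ` V))"
  have N: "last u < N" if "u \<in> V" for u using that fin unfolding N_def by (simp add: le_imp_less_Suc)
  have cV: "cc V > 0" unfolding cc_def
  proof (rule OmS_pos[where g="gkey N", OF fin])
    fix v w assume "lt v w"
    then show "gkey N w < gkey N v" unfolding lt_def
      by (rule planar_lt_gkey) (use N in \<open>auto simp: V_def\<close>)
  qed
  have c0: "cc {} = 1" unfolding cc_def by (rule OmS_empty_measure)
  have VDs: "V \<in> Ds" and eDs: "{} \<in> Ds" using cl by (auto simp: Ds_def downset_def)
  have trm: "poset_fact V lt / (poset_fact (V - D) lt * poset_fact D lt) * h ^ card (V - D) * k ^ card D
       = (h ^ card (V-D) * cc (V-D)) * (k ^ card D * cc D) / cc V" for D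
    unfolding poset_fact_eq cc_def[symmetric] frac_alg by (simp add: field_simps)
  have "(\<Sum>D\<in>Ds. poset_fact V lt / (poset_fact (V - D) lt * poset_fact D lt) * h ^ card (V - D) * k ^ card D) = (h+k) ^ card V"
  proof (cases "h > 0 \<and> k > 0")
    case True
    have "(h+k) ^ card V * cc V = (\<Sum>D\<in>Ds. (h ^ card (V-D) * cc (V-D)) * (k ^ card D * cc D))"
      unfolding cc_def Ds_def using fin True cl by (intro general_identity) auto
    then show ?thesis using cV unfolding trm sum_divide_distrib[symmetric] by (metis nonzero_eq_divide_eq order_less_irrefl)
  next
    case False
    then have "h = 0 \<or> k = 0" using assms by auto
    then show ?thesis
    proof
      assume h0: "h = 0"
      have "(\<Sum>D\<in>Ds. poset_fact V lt / (poset_fact (V - D) lt * poset_fact D lt) * h ^ card (V - D) * k ^ card D)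
          = (\<Sum>D\<in>{V}. poset_fact V lt / (poset_fact (V - D) lt * poset_fact D lt) * h ^ card (V - D) * k ^ card D)"
      proof (rule sum.mono_neutral_right[OF finDs])
        show "{V} \<subseteq> Ds" using VDs by auto
        show "\<forall>i\<in>Ds - {V}. poset_fact V lt / (poset_fact (V - i) lt * poset_fact i lt) * h ^ card (V - i) * k ^ card i = 0"
        proof
          fix D assume "D \<in> Ds - {V}"
          then have "V - D \<noteq> {}" by (auto simp: Ds_def)
          then have "card (V - D) > 0" using fin by auto
          then show "poset_fact V lt / (poset_fact (V - D) lt * poset_fact D lt) * h ^ card (V - D) * k ^ card D = 0"
            using h0 by simp
        qed
      qed
      also have "\<dots> = (h+k) ^ card V" using h0 cV c0 unfolding trm by simp
      finally show ?thesis .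
    next
      assume k0: "k = 0"
      have "(\<Sum>D\<in>Ds. poset_fact V lt / (poset_fact (V - D) lt * poset_fact D lt) * h ^ card (V - D) * k ^ card D)
          = (\<Sum>D\<in>{{}}. poset_fact V lt / (poset_fact (V - D) lt * poset_fact D lt) * h ^ card (V - D) * k ^ card D)"
      proof (rule sum.mono_neutral_right[OF finDs])
        show "{{}} \<subseteq> Ds" using eDs by auto
        show "\<forall>i\<in>Ds - {{}}. poset_fact V lt / (poset_fact (V - i) lt * poset_fact i lt) * h ^ card (V - i) * k ^ card i = 0"
        proof
          fix D assume D: "D \<in> Ds - {{}}"
          then have "finite D" using fin by (auto simp: Ds_def intro: finite_subset)
          then have "card D > 0" using D by auto
          then show "poset_fact V lt / (poset_fact (V - D) lt * poset_fact D lt) * h ^ card (V - D) * k ^ card D = 0"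
            using k0 by simp
        qed
      qed
      also have "\<dots> = (h+k) ^ card V" using k0 cV c0 unfolding trm by simp
      finally show ?thesis .
    qed
  qed
  then show ?thesis unfolding V_def lt_def Ds_def by simp
qed

end
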